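(* Let $M$ be a compact Riemannian manifold, $f\colon M\to M$ a $C^1$ map, and $\phi\colon\overleftarrow M_f\to\mathbb R^n$ a $d_1$-continuous function with a $d_1$-continuous extension $\tilde\phi\colon M^{\mathbb Z}\to\mathbb R^n$. Let $\rho\in C^\infty(\mathbb R)$ be a non-negative bump function with support in $(-1,1)$ and $\rho(0)>0$, let $\mu$ be a Lebesgue (smooth) probability measure on $M$ and $\tilde\mu=\bigotimes_{\mathbb Z}\mu$ the product probability on $M^{\mathbb Z}$. For $r>0$ and a bounded measurable $g\colon M^{\mathbb Z}\to\mathbb R^n$ set $g_r(\underline x)=\int_{M^{\mathbb Z}}g(\underline y)\,\rho\!\left(\frac{d_1(\underline x,\underline y)}{r}\right)d\tilde\mu(\underline y)$ for $\underline x\in\overleftarrow M_f$, and let $1\!\!1$ denote the constant function $1$ on $M^{\mathbb Z}$. Then for every $r>0$: (i) $\tilde\phi_r$ and $\tilde\phi_r/1\!\!1_r$ are well defined on $\overleftarrow M_f$ (in particular $1\!\!1_r>0$); (ii) $\tilde\phi_r$ is $d_1$-continuous and $d_\infty$-Lipschitz; (iii) $\sup_{\underline x\in\overleftarrow M_f}|\tilde\phi_r(\underline x)/1\!\!1_r(\underline x)-\tilde\phi(\underline x)|\to0$ as $r\to0$; (iv) the support of $\tilde\phi_r$ is contained in the $r$-neighborhood (for $d_1$) of the support of $\tilde\phi$.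
   Context: $\overleftarrow M_f=\{(x_n)_{n\in\mathbb Z}\in M^{\mathbb Z}: f(x_n)=x_{n+1}\}$; $d_1(\underline x,\underline y)=\sum_{n\in\mathbb Z}2^{-|n|}d(x_n,y_n)$ (which metrizes the product topology on $M^{\mathbb Z}$), $d_\infty(\underline x,\underline y)=\sup_n d(x_n,y_n)$. *)

theory Defs
  imports "HOL-Analysis.Analysis" "HOL-Probability.Probability"
begin

definition orbits :: "('a \<Rightarrow> 'a) \<Rightarrow> (int \<Rightarrow> 'a) set" where
  "orbits f = {x. \<forall>n. f (x n) = x (n + 1)}"

definition d1 :: "(int \<Rightarrow> 'a::metric_space) \<Rightarrow> (int \<Rightarrow> 'a) \<Rightarrow> real" where
  "d1 x y = (\<Sum>\<^sub>\<infinity>n. (1/2) ^ nat \<bar>n\<bar> * dist (x n) (y n))"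

definition dinf :: "(int \<Rightarrow> 'a::metric_space) \<Rightarrow> (int \<Rightarrow> 'a) \<Rightarrow> real" where
  "dinf x y = (SUP n. dist (x n) (y n))"

definition d1_continuous_on :: "(int \<Rightarrow> 'a::metric_space) set \<Rightarrow> ((int \<Rightarrow> 'a) \<Rightarrow> 'b::real_normed_vector) \<Rightarrow> bool" where
  "d1_continuous_on S g \<longleftrightarrow>
     (\<forall>x\<in>S. \<forall>e>0. \<exists>d>0. \<forall>y\<in>S. d1 x y < d \<longrightarrow> norm (g y - g x) < e)"

definition d1_support :: "((int \<Rightarrow> 'a::metric_space) \<Rightarrow> 'b::zero) \<Rightarrow> (int \<Rightarrow> 'a) set \<Rightarrow> (int \<Rightarrow> 'a) set" where
  "d1_support g S = {x\<in>S. \<forall>e>0. \<exists>y\<in>S. g y \<noteq> 0 \<and> d1 x y < e}"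

definition d1_nbhd :: "(int \<Rightarrow> 'a::metric_space) set \<Rightarrow> real \<Rightarrow> (int \<Rightarrow> 'a) set" where
  "d1_nbhd A r = {x. \<exists>y\<in>A. d1 x y < r}"

definition smooth_real :: "(real \<Rightarrow> real) \<Rightarrow> bool" where
  "smooth_real \<rho> \<longleftrightarrow> (\<exists>D. D 0 = \<rho> \<and> (\<forall>k x. (D k has_real_derivative D (Suc k) x) (at x)))"

definition smoothing ::
  "'a::metric_space measure \<Rightarrow> (real \<Rightarrow> real) \<Rightarrow> real \<Rightarrow> ((int \<Rightarrow> 'a) \<Rightarrow> 'b::{banach,second_countable_topology})
     \<Rightarrow> (int \<Rightarrow> 'a) \<Rightarrow> 'b" where
  "smoothing \<mu> \<rho> r g x = (\<integral>y. \<rho> (d1 x y / r) *\<^sub>R g y \<partial>(PiM UNIV (\<lambda>_. \<mu>)))"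

end

theory Submission
  imports Defs
begin

definition wt :: "int \<Rightarrow> real" where "wt n = (1/2) ^ nat \<bar>n\<bar>"

lemma wt_pos: "wt n > 0" unfolding wt_def by simp

lemma wt_sum_sym: "sum wt {-int N..int N} = 3 - 2 * (1/2)^N"
proof (induction N)
  case 0 then show ?case by (simp add: wt_def)
next
  case (Suc N)
  have e: "{-int (Suc N)..int (Suc N)} = insert (-(int N+1)) (insert (int N+1) {-int N..int N})"
    by auto
  have "wt (-(int N+1)) = (1/2)^Suc N" "wt (int N+1) = (1/2)^Suc N"
    unfolding wt_def by (simp_all add: nat_add_distrib)
  then show ?case unfolding e using Suc by simp
qed

lemma wt_summable: "wt summable_on UNIV"
proof (rule nonneg_bdd_above_summable_on)
  show "bdd_above (sum wt ` {F. F \<subseteq> UNIV \<and> finite F})"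
  proof (rule bdd_aboveI2)
    fix F :: "int set" assume "F \<in> {F. F \<subseteq> UNIV \<and> finite F}"
    then have fin: "finite F" by simp
    define N where "N = (\<Sum>n\<in>F. \<bar>n\<bar>)"
    have N: "\<forall>n\<in>F. \<bar>n\<bar> \<le> N" unfolding N_def using fin
      by (intro ballI member_le_sum) auto
    have "F \<subseteq> {-int (nat N)..int (nat N)}"
    proof
      fix n assume "n \<in> F" then have "\<bar>n\<bar> \<le> N" using N by blast
      then show "n \<in> {-int (nat N)..int (nat N)}" by (auto simp: abs_le_iff)
    qed
    then have "sum wt F \<le> sum wt {-int (nat N)..int (nat N)}"
      by (intro sum_mono2) (simp_all add: less_imp_le wt_pos)
    also have "\<dots> \<le> 3" unfolding wt_sum_sym by simp
    finally show "sum wt F \<le> 3" .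
  qed
qed (auto intro: less_imp_le wt_pos)

lemma dist_bound:
  assumes "compact (UNIV :: 'a::metric_space set)"
  shows "\<exists>D. \<forall>a b::'a. dist a b \<le> D"
  using compact_imp_bounded[OF assms] unfolding bounded_two_points by auto


lemma wt_nonneg[simp]: "0 \<le> wt n" using wt_pos less_imp_le by blast
lemma wt_dist_nonneg[simp]: "0 \<le> wt n * dist a b" by simp
lemma wt_mono: "a \<le> b \<Longrightarrow> wt n * a \<le> wt n * b" by (rule mult_left_mono) simp_all

lemma wt_le1: "wt n \<le> 1" unfolding wt_def by (simp add: power_le_one)

definition W :: real where "W = infsum wt UNIV"

lemma W_ge1: "W \<ge> 1"
proof -
  have "sum wt {0} \<le> infsum wt UNIV"
    by (rule finite_sum_le_infsum[OF wt_summable]) (auto intro: less_imp_le wt_pos)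
  then show ?thesis by (simp add: W_def wt_def)
qed

locale cpt =
  fixes tag :: "'a::metric_space itself"
  assumes cpt: "compact (UNIV :: 'a set)"
begin

lemma Dex: "\<exists>D\<ge>0. \<forall>a b::'a. dist a b \<le> D"
proof -
  obtain D where "\<forall>a b::'a. dist a b \<le> D" using dist_bound[OF cpt] by blast
  moreover then have "D \<ge> 0" using zero_le_dist order_trans by blast
  ultimately show ?thesis by blast
qed

lemma d1_summ: "(\<lambda>n. wt n * dist (x n) (y n :: 'a)) summable_on A"
proof -
  obtain D where D: "D \<ge> 0" "\<forall>a b::'a. dist a b \<le> D" using Dex by blast
  have "(\<lambda>n. D * wt n) summable_on UNIV"
    using wt_summable by (rule summable_on_cmult_right)
  then have "(\<lambda>n. wt n * dist (x n) (y n :: 'a)) summable_on UNIV"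
  proof (rule summable_on_comparison_test)
    fix n show "wt n * dist (x n) (y n) \<le> D * wt n"
      using wt_mono[of "dist (x n) (y n)" D n] D by (simp add: mult.commute)
  qed simp_all
  then show ?thesis by (rule summable_on_subset) simp
qed

lemma d1_alt: "d1 x y = infsum (\<lambda>n. wt n * dist (x n) (y n :: 'a)) UNIV"
  by (simp add: d1_def wt_def)

lemma d1_nonneg: "d1 x (y::int\<Rightarrow>'a) \<ge> 0"
  unfolding d1_alt by (rule infsum_nonneg) (simp add: less_imp_le wt_pos)

lemma d1_sym: "d1 x (y::int\<Rightarrow>'a) = d1 y x"
  unfolding d1_alt by (simp add: dist_commute)

lemma d1_self: "d1 x (x::int\<Rightarrow>'a) = 0"
  unfolding d1_alt by simp

lemma d1_tri: "d1 x z \<le> d1 x y + d1 y (z::int\<Rightarrow>'a)"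
proof -
  have "d1 x z \<le> infsum (\<lambda>n. wt n * dist (x n) (y n) + wt n * dist (y n) (z n)) UNIV"
    unfolding d1_alt
    by (rule infsum_mono[OF d1_summ summable_on_add[OF d1_summ d1_summ]])
       (simp add: distrib_left[symmetric] wt_mono dist_triangle)
  also have "\<dots> = d1 x y + d1 y z"
    unfolding d1_alt by (rule infsum_add[OF d1_summ d1_summ])
  finally show ?thesis .
qed

lemma d1_diff: "\<bar>d1 x z - d1 y (z::int\<Rightarrow>'a)\<bar> \<le> d1 x y"
  using d1_tri[of x z y] d1_tri[of y z x] d1_sym[of x y] by linarith

lemma dinf_bdd: "bdd_above (range (\<lambda>n. dist (x n) (y n :: 'a)))"
proof -
  obtain D where D: "\<forall>a b::'a. dist a b \<le> D" using Dex by blast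
  show ?thesis by (rule bdd_aboveI2[where M=D]) (use D in auto)
qed

lemma dist_le_dinf: "dist (x n) (y n :: 'a) \<le> dinf x y"
  unfolding dinf_def by (rule cSUP_upper[OF _ dinf_bdd]) simp

lemma d1_le_dinf: "d1 x (y::int\<Rightarrow>'a) \<le> W * dinf x y"
proof -
  have "d1 x y \<le> infsum (\<lambda>n. dinf x y * wt n) UNIV"
    unfolding d1_alt
    by (rule infsum_mono[OF d1_summ summable_on_cmult_right[OF wt_summable]])
       (simp add: mult.commute[of "dinf x y"] wt_mono dist_le_dinf)
  also have "\<dots> = W * dinf x y"
    unfolding W_def by (simp add: infsum_cmult_right[OF wt_summable])
  finally show ?thesis .
qed

lemma wt_dist_le_d1: "wt n * dist (x n) (y n) \<le> d1 x (y::int\<Rightarrow>'a)"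
proof -
  have "sum (\<lambda>n. wt n * dist (x n) (y n)) {n} \<le> d1 x y"
    unfolding d1_alt by (rule finite_sum_le_infsum[OF d1_summ]) (auto intro: less_imp_le wt_pos)
  then show ?thesis by simp
qed

lemma d1_small:
  assumes "e > 0"
  shows "\<exists>F d. finite F \<and> d > 0 \<and> (\<forall>x y::int\<Rightarrow>'a. (\<forall>n\<in>F. dist (x n) (y n) < d) \<longrightarrow> d1 x y < e)"
proof -
  obtain D where D: "D \<ge> 0" "\<forall>a b::'a. dist a b \<le> D" using Dex by blast
  obtain F where F: "finite F" "dist (sum wt F) (infsum wt UNIV) \<le> e / (4 * (D + 1))"
    using infsum_finite_approximation[OF wt_summable, of "e / (4 * (D+1))"] assms D by auto
  have WF: "W - sum wt F \<le> e / (4 * (D + 1))" using F by (simp add: W_def dist_real_def)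
  have sFW: "sum wt F \<le> W"
    unfolding W_def by (rule finite_sum_le_infsum[OF wt_summable F(1)]) (auto intro: less_imp_le wt_pos)
  define d where "d = e / (4 * W)"
  have dpos: "d > 0" using assms W_ge1 by (simp add: d_def)
  have "d1 x y < e" if H: "\<forall>n\<in>F. dist (x n) (y n) < d" for x y :: "int \<Rightarrow> 'a"
  proof -
    let ?g = "\<lambda>n. wt n * dist (x n) (y n)"
    have split: "d1 x y = sum ?g F + infsum ?g (-F)"
    proof -
      have "infsum ?g (F \<union> -F) = infsum ?g F + infsum ?g (-F)"
        by (rule infsum_Un_disjoint[OF d1_summ d1_summ]) auto
      then show ?thesis unfolding d1_alt using F(1) by (simp add: Un_def)
    qed
    have "sum ?g F \<le> sum (\<lambda>n. d * wt n) F"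
    proof (rule sum_mono)
      fix n assume "n \<in> F"
      then show "wt n * dist (x n) (y n) \<le> d * wt n"
      proof -
        have "dist (x n) (y n) \<le> d" using H \<open>n \<in> F\<close> less_imp_le by blast
        then show ?thesis using wt_mono[of "dist (x n) (y n)" d n] by (simp add: mult.commute)
      qed
    qed
    also have "\<dots> = d * sum wt F" by (simp add: sum_distrib_left)
    also have "\<dots> \<le> d * W" using sFW dpos by simp
    also have "\<dots> = e / 4" using W_ge1 by (simp add: d_def)
    finally have p1: "sum ?g F \<le> e / 4" .
    have "infsum ?g (-F) \<le> infsum (\<lambda>n. D * wt n) (-F)"
      by (rule infsum_mono[OF d1_summ summable_on_cmult_right[OF summable_on_subset[OF wt_summable]]])
         (use D in \<open>auto simp: mult.commute[of D] intro!: wt_mono\<close>)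
    also have "\<dots> = D * infsum wt (-F)"
      by (rule infsum_cmult_right[OF summable_on_subset[OF wt_summable]]) simp
    also have "infsum wt (-F) = W - sum wt F"
    proof -
      have "infsum wt (F \<union> -F) = infsum wt F + infsum wt (-F)"
        by (rule infsum_Un_disjoint[OF summable_on_subset[OF wt_summable] summable_on_subset[OF wt_summable]]) auto
      then show ?thesis using F(1) by (simp add: W_def Un_def)
    qed
    also have "D * (W - sum wt F) \<le> D * (e / (4 * (D + 1)))"
      using WF D by (intro mult_left_mono) auto
    also have "\<dots> \<le> e / 4"
      using D assms by (simp add: field_simps)
    finally have p2: "infsum ?g (-F) \<le> e / 4" .
    show ?thesis using split p1 p2 assms by linarith
  qed
  then show ?thesis using F(1) dpos by blast
qed

lemma compact_fun: "compact (UNIV :: (int \<Rightarrow> 'a) set)"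
proof -
  have "compact_space (euclidean :: 'a topology)"
    using cpt by (simp add: compact_space_def)
  then have "compact_space (product_topology (\<lambda>_::int. euclidean :: 'a topology) UNIV)"
    by (simp add: compact_space_product_topology)
  then have "compact_space (euclidean :: (int \<Rightarrow> 'a) topology)"
    by (simp add: euclidean_product_topology)
  then show ?thesis by (simp add: compact_space_def)
qed

lemma seqc:
  fixes x :: "nat \<Rightarrow> int \<Rightarrow> 'a"
  shows "\<exists>h z. strict_mono h \<and> (\<forall>n. (\<lambda>k. x (h k) n) \<longlonglongrightarrow> z n)"
proof -
  have "seq_compact (UNIV :: (int \<Rightarrow> 'a) set)"
    by (rule compact_imp_seq_compact[OF compact_fun])
  then obtain z h where h: "strict_mono h" "(x \<circ> h) \<longlonglongrightarrow> z"
    by (rule seq_compactE) auto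
  have "(\<lambda>k. x (h k) n) \<longlonglongrightarrow> z n" for n
  proof -
    have "isCont (\<lambda>w::int\<Rightarrow>'a. w n) z"
      using continuous_on_product_coordinates[of n] continuous_on_eq_continuous_at[OF open_UNIV] by blast
    from isCont_tendsto_compose[OF this h(2)] show ?thesis by (simp add: o_def)
  qed
  then show ?thesis using h by blast
qed

lemma lim_d1:
  fixes x :: "nat \<Rightarrow> int \<Rightarrow> 'a"
  assumes "\<And>n. (\<lambda>k. x k n) \<longlonglongrightarrow> z n"
  shows "(\<lambda>k. d1 (x k) z) \<longlonglongrightarrow> 0"
proof (rule tendstoI)
  fix e :: real assume e: "e > 0"
  obtain F d where Fd: "finite F" "d > 0" "\<forall>x y::int\<Rightarrow>'a. (\<forall>n\<in>F. dist (x n) (y n) < d) \<longrightarrow> d1 x y < e"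
    using d1_small[OF e] by blast
  have "\<forall>\<^sub>F k in sequentially. \<forall>n\<in>F. dist (x k n) (z n) < d"
    using Fd(1,2) assms by (auto intro!: eventually_ball_finite tendstoD)
  then show "\<forall>\<^sub>F k in sequentially. dist (d1 (x k) z) 0 < e"
    by eventually_elim (use Fd(3) d1_nonneg in auto)
qed

lemma d1_seqc:
  fixes x :: "nat \<Rightarrow> int \<Rightarrow> 'a"
  shows "\<exists>h z. strict_mono h \<and> (\<lambda>k. d1 (x (h k)) z) \<longlonglongrightarrow> 0"
proof -
  obtain h z where "strict_mono h" "\<forall>n. (\<lambda>k. x (h k) n) \<longlonglongrightarrow> z n" using seqc[of x] by blast
  moreover have "(\<lambda>k. d1 (x (h k)) z) \<longlonglongrightarrow> 0" using calculation(2) lim_d1[of "\<lambda>k. x (h k)" z] by blast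
  ultimately show ?thesis by blast
qed

end


context cpt begin

lemma d1c_bounded:
  fixes g :: "(int \<Rightarrow> 'a) \<Rightarrow> 'b::real_normed_vector"
  assumes g: "d1_continuous_on UNIV g"
  shows "\<exists>B. \<forall>y. norm (g y) \<le> B"
proof (rule ccontr)
  assume "\<not> ?thesis"
  then have H: "\<forall>B. \<exists>y. norm (g y) > B" by (simp add: not_le)
  then have "\<forall>k::nat. \<exists>y. norm (g y) > real k" by blast
  then obtain x where x: "\<And>k. norm (g (x k)) > real k" using choice[of "\<lambda>k y. norm (g y) > real k"] by blast
  obtain h z where hz: "strict_mono h" "(\<lambda>k. d1 (x (h k)) z) \<longlonglongrightarrow> 0"
    using d1_seqc[of x] by blast
  obtain d where d: "d > 0" "\<forall>y. d1 z y < d \<longrightarrow> norm (g y - g z) < 1"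
    using g[unfolded d1_continuous_on_def, rule_format, of z 1] by auto
  have ev1: "\<forall>\<^sub>F k in sequentially. d1 (x (h k)) z < d"
    using hz(2) d(1) by (rule order_tendstoD)
  obtain N :: nat where N: "real N > norm (g z) + 1" using reals_Archimedean2 by blast
  have ev2: "\<forall>\<^sub>F k in sequentially. k \<ge> N" by (rule eventually_ge_at_top)
  have "\<forall>\<^sub>F k in sequentially. False"
    using ev1 ev2
  proof eventually_elim
    case (elim k)
    have "d1 z (x (h k)) < d" using elim(1) d1_sym[of z "x (h k)"] by simp
    then have "norm (g (x (h k)) - g z) < 1" using d(2) by blast
    then have "norm (g (x (h k))) < norm (g z) + 1" using norm_triangle_sub[of "g (x (h k))" "g z"] by linarith
    moreover have "real (h k) \<ge> real N" using seq_suble[OF hz(1), of k] elim(2) by simp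
    ultimately show False using x[of "h k"] N by linarith
  qed
  then show False by simp
qed

lemma d1c_unif:
  fixes g :: "(int \<Rightarrow> 'a) \<Rightarrow> 'b::real_normed_vector"
  assumes g: "d1_continuous_on UNIV g" and e: "e > 0"
  shows "\<exists>d>0. \<forall>x y. d1 x y < d \<longrightarrow> norm (g y - g x) < e"
proof (rule ccontr)
  assume neg: "\<not> ?thesis"
  then have H: "\<forall>d>0. \<exists>x y. d1 x y < d \<and> norm (g y - g x) \<ge> e"
  proof (intro allI impI)
    fix d :: real assume "d > 0"
    then have "\<not> (\<forall>x y. d1 x y < d \<longrightarrow> norm (g y - g x) < e)" using neg by blast
    then show "\<exists>x y. d1 x y < d \<and> norm (g y - g x) \<ge> e" by (auto simp: not_less)
  qed
  have "\<forall>k::nat. \<exists>p. d1 (fst p) (snd p) < inverse (real (Suc k)) \<and> norm (g (snd p) - g (fst p)) \<ge> e"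
  proof
    fix k :: nat
    have "inverse (real (Suc k)) > 0" by simp
    then obtain x y where "d1 x y < inverse (real (Suc k)) \<and> norm (g y - g x) \<ge> e" using H by blast
    then show "\<exists>p. d1 (fst p) (snd p) < inverse (real (Suc k)) \<and> norm (g (snd p) - g (fst p)) \<ge> e"
      by (intro exI[of _ "(x, y)"]) simp
  qed
  from choice[OF this] obtain p where p: "\<forall>k. d1 (fst (p k)) (snd (p k)) < inverse (real (Suc k)) \<and> norm (g (snd (p k)) - g (fst (p k))) \<ge> e"
    by blast
  define x where "x = (\<lambda>k. fst (p k))"
  define y where "y = (\<lambda>k. snd (p k))"
  have xy: "\<And>k. d1 (x k) (y k) < inverse (real (Suc k))" "\<And>k. norm (g (y k) - g (x k)) \<ge> e"
    using p unfolding x_def y_def by auto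
  obtain h z where hz: "strict_mono h" "(\<lambda>k. d1 (x (h k)) z) \<longlonglongrightarrow> 0"
    using d1_seqc[of x] by blast
  obtain d where d: "d > 0" "\<forall>w. d1 z w < d \<longrightarrow> norm (g w - g z) < e/2"
    using g[unfolded d1_continuous_on_def, rule_format, of z "e/2"] e by auto
  have ev1: "\<forall>\<^sub>F k in sequentially. d1 (x (h k)) z < d/2"
    using hz(2) d(1) by (intro order_tendstoD) auto
  have "d/2 > 0" using d(1) by simp
  then obtain N :: nat where N: "inverse (real (Suc N)) < d/2" using reals_Archimedean by blast
  have ev2: "\<forall>\<^sub>F k in sequentially. k \<ge> N" by (rule eventually_ge_at_top)
  have "\<forall>\<^sub>F k in sequentially. False"
    using ev1 ev2
  proof eventually_elim
    case (elim k)
    have hk: "h k \<ge> N" using seq_suble[OF hz(1), of k] elim(2) by simp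
    have "inverse (real (Suc (h k))) \<le> inverse (real (Suc N))"
      using hk by (simp add: le_imp_inverse_le)
    then have "d1 (x (h k)) (y (h k)) < d/2" using xy(1)[of "h k"] N by linarith
    then have "d1 z (y (h k)) < d" using d1_tri[of z "y (h k)" "x (h k)"] d1_sym[of z "x (h k)"] elim(1) d(1) by linarith
    then have a: "norm (g (y (h k)) - g z) < e/2" using d(2) by blast
    have "d1 z (x (h k)) < d" using elim(1) d1_sym[of z "x (h k)"] d(1) by linarith
    then have b: "norm (g (x (h k)) - g z) < e/2" using d(2) by blast
    have "norm (g (y (h k)) - g (x (h k))) \<le> norm (g (y (h k)) - g z) + norm (g (x (h k)) - g z)"
      using norm_triangle_ineq4[of "g (y (h k)) - g z" "g (x (h k)) - g z"] by simp
    then show False using a b xy(2)[of "h k"] by linarith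
  qed
  then show False by simp
qed

lemma orbits_ne:
  fixes f :: "'a \<Rightarrow> 'a"
  assumes f: "continuous_on UNIV f"
  shows "orbits f \<noteq> {}"
proof -
  define x where "x = (\<lambda>N::nat. \<lambda>n::int. (f ^^ nat (n + int N)) undefined)"
  obtain h z where hz: "strict_mono h" "\<And>n. (\<lambda>k. x (h k) n) \<longlonglongrightarrow> z n"
    using seqc[of x] by blast
  have "f (z n) = z (n + 1)" for n
  proof -
    have c: "isCont f (z n)" using f continuous_on_eq_continuous_at[OF open_UNIV] by blast
    have l1: "(\<lambda>k. f (x (h k) n)) \<longlonglongrightarrow> f (z n)" by (rule isCont_tendsto_compose[OF c hz(2)])
    have ev: "\<forall>\<^sub>F k in sequentially. f (x (h k) n) = x (h k) (n + 1)"
    proof -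
      have "\<forall>\<^sub>F k in sequentially. k \<ge> nat (- n)" by (rule eventually_ge_at_top)
      then show ?thesis
      proof eventually_elim
        case (elim k)
        then have "h k \<ge> nat (-n)" using seq_suble[OF hz(1), of k] by simp
        then have "n + int (h k) \<ge> 0" by linarith
        then have "nat (n + 1 + int (h k)) = Suc (nat (n + int (h k)))" by linarith
        then show ?case unfolding x_def by simp
      qed
    qed
    have "(\<lambda>k. x (h k) (n + 1)) \<longlonglongrightarrow> f (z n)"
      by (rule Lim_transform_eventually[OF l1 ev])
    then show ?thesis using hz(2)[of "n+1"] LIMSEQ_unique by blast
  qed
  then have "z \<in> orbits f" unfolding orbits_def by simp
  then show ?thesis by blast
qed

lemma space_P:
  assumes "sets \<mu> = sets (borel :: 'a measure)"
  shows "space (PiM (UNIV::int set) (\<lambda>_. \<mu>)) = UNIV"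
proof -
  have "space \<mu> = UNIV" using sets_eq_imp_space_eq[OF assms] by simp
  then show ?thesis by (simp add: space_PiM)
qed

lemma net:
  assumes "\<delta> > 0"
  shows "\<exists>cs::'a list. \<forall>a. \<exists>i<length cs. dist a (cs!i) < \<delta>"
proof -
  have cov: "UNIV \<subseteq> (\<Union>c\<in>UNIV. ball (c::'a) \<delta>)" using assms by auto
  have opn: "\<And>T. T \<in> UNIV \<Longrightarrow> open (ball T \<delta>)" by simp
  obtain C where C: "C \<subseteq> UNIV" "finite C" "UNIV \<subseteq> (\<Union>c\<in>C. ball (c::'a) \<delta>)"
    by (rule compactE_image[OF cpt opn cov]) blast
  obtain cs where cs: "set cs = C" using finite_list[OF C(2)] by blast
  have "\<exists>i<length cs. dist a (cs!i) < \<delta>" for a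
  proof -
    have "a \<in> (\<Union>c\<in>C. ball (c::'a) \<delta>)" using C(3) by blast
    then obtain c where c: "c \<in> C" "a \<in> ball c \<delta>" by blast
    have "c \<in> set cs" using cs c(1) by simp
    then obtain i where i: "i < length cs" "cs ! i = c" by (auto simp: in_set_conv_nth)
    have "dist a (cs ! i) < \<delta>" using c(2) i(2) by (simp add: dist_commute)
    then show ?thesis using i(1) by blast
  qed
  then show ?thesis by blast
qed
end

context cpt begin

lemma meas_d1c:
  fixes g :: "(int \<Rightarrow> 'a) \<Rightarrow> 'b::real_normed_vector" and \<mu> :: "'a measure"
  assumes \<mu>: "sets \<mu> = sets borel" and g: "d1_continuous_on UNIV g"
  shows "g \<in> borel_measurable (PiM (UNIV::int set) (\<lambda>_. \<mu>))"
proof -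
  let ?P = "PiM (UNIV::int set) (\<lambda>_. \<mu>)"
  have spP: "space ?P = UNIV" by (rule space_P[OF \<mu>])
  define Q where "Q k F \<delta> cs \<longleftrightarrow> finite F \<and> \<delta> > 0 \<and>
      (\<forall>x y::int\<Rightarrow>'a. (\<forall>n\<in>F. dist (x n) (y n) < \<delta>) \<longrightarrow> d1 x y < inverse (real (Suc k))) \<and>
      (\<forall>a. \<exists>i<length cs. dist a (cs!i) < \<delta>)" for k :: nat and F :: "int set" and \<delta> :: real and cs :: "'a list"
  have ex: "\<forall>k. \<exists>F. \<exists>\<delta>. \<exists>cs. Q k F \<delta> cs"
  proof
    fix k :: nat
    have "inverse (real (Suc k)) > 0" by simp
    then obtain F \<delta> where Fd: "finite F" "\<delta> > 0"
        "\<forall>x y::int\<Rightarrow>'a. (\<forall>n\<in>F. dist (x n) (y n) < \<delta>) \<longrightarrow> d1 x y < inverse (real (Suc k))"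
      using d1_small[of "inverse (real (Suc k))"] by auto
    obtain cs :: "'a list" where "\<forall>a. \<exists>i<length cs. dist a (cs!i) < \<delta>" using net[OF Fd(2)] by auto
    then have "Q k F \<delta> cs" unfolding Q_def using Fd by simp
    then show "\<exists>F. \<exists>\<delta>. \<exists>cs. Q k F \<delta> cs" by blast
  qed
  from choice[OF ex] obtain F where "\<forall>k. \<exists>\<delta>. \<exists>cs. Q k (F k) \<delta> cs" by blast
  from choice[OF this] obtain \<delta> where "\<forall>k. \<exists>cs. Q k (F k) (\<delta> k) cs" by blast
  from choice[OF this] obtain cs where HQ: "\<forall>k. Q k (F k) (\<delta> k) (cs k)" by blast
  have H: "\<And>k. finite (F k)" "\<And>k. \<delta> k > 0"
      "\<And>k (x::int\<Rightarrow>'a) y. (\<forall>n\<in>F k. dist (x n) (y n) < \<delta> k) \<Longrightarrow> d1 x y < inverse (real (Suc k))"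
      "\<And>k (a::'a). \<exists>i<length (cs k). dist a (cs k ! i) < \<delta> k"
    using HQ unfolding Q_def by blast+
  define L where "L k a = (LEAST i. dist a (cs k ! i) < \<delta> k)" for k a
  define q where "q k a = cs k ! L k a" for k a
  have q1: "dist a (q k a) < \<delta> k" and q2: "q k a \<in> set (cs k)" for k a
  proof -
    obtain i where i: "i < length (cs k)" "dist a (cs k ! i) < \<delta> k" using H(4) by blast
    show "dist a (q k a) < \<delta> k" unfolding q_def L_def by (rule LeastI[of _ i]) (rule i(2))
    have "L k a \<le> i" unfolding L_def by (rule Least_le) (rule i(2))
    then show "q k a \<in> set (cs k)" unfolding q_def using i(1) by simp
  qed
  have qm: "q k \<in> measurable \<mu> (count_space UNIV)" for k
  proof -
    have "(\<lambda>a. dist a (cs k ! i) < \<delta> k) \<in> measurable \<mu> (count_space UNIV)" for i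
    proof -
      have "{a \<in> space \<mu>. dist a (cs k ! i) < \<delta> k} = ball (cs k ! i) (\<delta> k)"
        using sets_eq_imp_space_eq[OF \<mu>] by (auto simp: dist_commute)
      also have "\<dots> \<in> sets \<mu>" unfolding \<mu> by simp
      finally show ?thesis unfolding pred_def .
    qed
    then have "L k \<in> measurable \<mu> (count_space UNIV)"
      unfolding L_def by (rule measurable_Least)
    then show ?thesis unfolding q_def[abs_def]
      by (rule measurable_compose) (rule measurable_count_space)
  qed
  define A where "A k y = (\<lambda>n. if n \<in> F k then q k (y n) else undefined)" for k and y :: "int \<Rightarrow> 'a"
  have dA: "d1 (A k y) y < inverse (real (Suc k))" for k y
    by (rule H(3)) (simp add: A_def dist_commute q1)
  define S where "S k = {v :: int \<Rightarrow> 'a. \<forall>n. (n \<in> F k \<longrightarrow> v n \<in> set (cs k)) \<and> (n \<notin> F k \<longrightarrow> v n = undefined)}" for k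
  have finS: "finite (S k)" for k
    unfolding S_def by (rule finite_set_of_finite_funs[OF H(1)]) simp
  have Am: "A k \<in> measurable ?P (count_space (S k))" for k
    unfolding measurable_count_space_eq2[OF finS]
  proof (intro conjI ballI)
    show "A k \<in> space ?P \<rightarrow> S k" by (auto simp: A_def S_def q2)
    fix v assume v: "v \<in> S k"
    have eq: "A k -` {v} \<inter> space ?P = {y \<in> space ?P. \<forall>n\<in>F k. q k (y n) = v n}"
    proof (intro set_eqI iffI)
      fix y assume "y \<in> A k -` {v} \<inter> space ?P"
      then show "y \<in> {y \<in> space ?P. \<forall>n\<in>F k. q k (y n) = v n}" by (auto simp: A_def)
    next
      fix y assume y: "y \<in> {y \<in> space ?P. \<forall>n\<in>F k. q k (y n) = v n}"
      have "A k y = v"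
      proof
        fix n show "A k y n = v n" using y v by (cases "n \<in> F k") (auto simp: A_def S_def)
      qed
      then show "y \<in> A k -` {v} \<inter> space ?P" using y by simp
    qed
    have qn[measurable]: "(\<lambda>y. q k (y n)) \<in> measurable ?P (count_space UNIV)" for n
      by (rule measurable_compose[OF measurable_component_singleton[of n UNIV "\<lambda>_. \<mu>"] qm[of k]]) simp
    have fk[measurable]: "finite (F k)" by (rule H(1))
    have "Measurable.pred ?P (\<lambda>y. \<forall>n\<in>F k. q k (y n) = v n)" by measurable
    then show "A k -` {v} \<inter> space ?P \<in> sets ?P" unfolding eq pred_def .
  qed
  have gAm: "(\<lambda>y. g (A k y)) \<in> borel_measurable ?P" for k
    by (rule measurable_compose[OF Am]) simp
  show ?thesis
  proof (rule borel_measurable_LIMSEQ_metric[OF gAm])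
    fix y :: "int \<Rightarrow> 'a"
    show "(\<lambda>k. g (A k y)) \<longlonglongrightarrow> g y"
    proof (rule tendstoI)
      fix e :: real assume e: "e > 0"
      obtain d where d: "d > 0" "\<forall>w. d1 y w < d \<longrightarrow> norm (g w - g y) < e"
        using g[unfolded d1_continuous_on_def, rule_format, of y e] e by auto
      obtain N :: nat where N: "inverse (real (Suc N)) < d" using reals_Archimedean d(1) by blast
      have "\<forall>\<^sub>F k in sequentially. k \<ge> N" by (rule eventually_ge_at_top)
      then show "\<forall>\<^sub>F k in sequentially. dist (g (A k y)) (g y) < e"
      proof eventually_elim
        case (elim k)
        have "inverse (real (Suc k)) \<le> inverse (real (Suc N))"
          using elim by (simp add: le_imp_inverse_le)
        then have "d1 y (A k y) < d" using dA[of k y] d1_sym[of y "A k y"] N by linarith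
        then show ?case using d(2) by (simp add: dist_norm)
      qed
    qed
  qed
qed

end

lemma rho_D:
  assumes "smooth_real \<rho>"
  obtains D where "D 0 = \<rho>" "\<And>k x. (D k has_real_derivative D (Suc k) x) (at x)"
  using assms unfolding smooth_real_def by blast

lemma rho_cont:
  assumes "smooth_real \<rho>"
  shows "continuous_on UNIV \<rho>"
proof -
  obtain D where D: "D 0 = \<rho>" "\<And>k x. (D k has_real_derivative D (Suc k) x) (at x)"
    using rho_D[OF assms] by blast
  have "isCont \<rho> x" for x using DERIV_isCont[OF D(2)[of 0 x]] D(1) by simp
  then show ?thesis by (simp add: continuous_at_imp_continuous_on)
qed

lemma rho_zero:
  assumes "closure {t. \<rho> t \<noteq> 0} \<subseteq> {-1<..<1}" and "1 \<le> \<bar>t::real\<bar>"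
  shows "\<rho> t = 0"
proof (rule ccontr)
  assume "\<rho> t \<noteq> 0"
  then have "t \<in> closure {t. \<rho> t \<noteq> 0}" by (intro subsetD[OF closure_subset]) simp
  then have "t \<in> {-1<..<1}" using assms(1) by blast
  then show False using assms(2) by auto
qed

lemma rho_strict:
  fixes \<rho> :: "real \<Rightarrow> real"
  assumes "closure {t. \<rho> t \<noteq> 0} \<subseteq> {-1<..<1}"
  shows "\<exists>c. 0 < c \<and> c < 1 \<and> (\<forall>t. \<rho> t \<noteq> 0 \<longrightarrow> \<bar>t\<bar> < c)"
proof (cases "closure {t. \<rho> t \<noteq> 0} = {}")
  case True
  then have "\<forall>t. \<rho> t = 0" using closure_subset[of "{t. \<rho> t \<noteq> 0}"] by auto
  then show ?thesis by (intro exI[of _ "1/2"]) auto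
next
  case False
  let ?S = "closure {t. \<rho> t \<noteq> 0}"
  have "bounded ?S" using assms by (rule bounded_subset[OF bounded_Ioo])
  then have "compact ?S" by (simp add: compact_eq_bounded_closed)
  have "\<exists>x\<in>?S. \<forall>y\<in>?S. \<bar>y\<bar> \<le> \<bar>x\<bar>"
    by (rule continuous_attains_sup[OF \<open>compact ?S\<close> False]) (intro continuous_intros)
  then obtain x0 where x0: "x0 \<in> ?S" "\<forall>y\<in>?S. \<bar>y\<bar> \<le> \<bar>x0\<bar>" by blast
  have "x0 \<in> {-1<..<1}" using x0(1) assms by blast
  then have "\<bar>x0\<bar> < 1" by auto
  moreover have "\<rho> t \<noteq> 0 \<Longrightarrow> \<bar>t\<bar> \<le> \<bar>x0\<bar>" for t
  proof -
    assume "\<rho> t \<noteq> 0"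
    then have "t \<in> ?S" by (intro subsetD[OF closure_subset]) simp
    then show ?thesis using x0(2) by blast
  qed
  ultimately have "0 < (\<bar>x0\<bar> + 1)/2 \<and> (\<bar>x0\<bar> + 1)/2 < 1 \<and> (\<forall>t. \<rho> t \<noteq> 0 \<longrightarrow> \<bar>t\<bar> < (\<bar>x0\<bar> + 1)/2)"
  proof (intro conjI allI impI)
    fix t assume "\<rho> t \<noteq> 0"
    then have "\<bar>t\<bar> \<le> \<bar>x0\<bar>" using \<open>\<And>t. \<rho> t \<noteq> 0 \<Longrightarrow> \<bar>t\<bar> \<le> \<bar>x0\<bar>\<close> by blast
    then show "\<bar>t\<bar> < (\<bar>x0\<bar> + 1)/2" using \<open>\<bar>x0\<bar> < 1\<close> by (simp add: field_simps)
  qed (use \<open>\<bar>x0\<bar> < 1\<close> in \<open>simp_all\<close>)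
  then show ?thesis by blast
qed

lemma rho_lip:
  fixes \<rho> :: "real \<Rightarrow> real"
  assumes sm: "smooth_real \<rho>" and supp: "closure {t. \<rho> t \<noteq> 0} \<subseteq> {-1<..<1}"
  shows "\<exists>K\<ge>0. (\<forall>s t. \<bar>\<rho> s - \<rho> t\<bar> \<le> K * \<bar>s - t\<bar>) \<and> (\<forall>t. \<rho> t \<le> \<rho> 0 + K)"
proof -
  obtain D where D: "D 0 = \<rho>" "\<And>k x. (D k has_real_derivative D (Suc k) x) (at x)"
    using rho_D[OF sm] by blast
  have dr: "(\<rho> has_real_derivative D 1 x) (at x)" for x using D(2)[of 0 x] D(1) by simp
  have c1: "continuous_on {-1..1} (\<lambda>z. \<bar>D 1 z\<bar>)"
  proof -
    have "isCont (D 1) x" for x using DERIV_isCont[OF D(2)[of 1 x]] by simp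
    then have "continuous_on {-1..1} (D 1)" by (simp add: continuous_at_imp_continuous_on)
    then show ?thesis by (intro continuous_intros)
  qed
  obtain z0 where z0: "z0 \<in> {-1..1}" "\<forall>y\<in>{-1..1}. \<bar>D 1 y\<bar> \<le> \<bar>D 1 z0\<bar>"
    using continuous_attains_sup[OF compact_Icc _ c1] by auto
  define K where "K = \<bar>D 1 z0\<bar>"
  have K0: "K \<ge> 0" by (simp add: K_def)
  have lip1: "\<bar>\<rho> b - \<rho> a\<bar> \<le> K * \<bar>b - a\<bar>" if "a < b" "-1 \<le> a" "b \<le> 1" for a b
  proof -
    obtain z where z: "a < z" "z < b" "\<rho> b - \<rho> a = (b - a) * D 1 z"
      using MVT2[OF \<open>a < b\<close>, of \<rho> "D 1"] dr by blast
    have "\<bar>D 1 z\<bar> \<le> K" using z0(2) z that unfolding K_def by auto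
    then have "\<bar>(b - a) * D 1 z\<bar> \<le> \<bar>b - a\<bar> * K" by (simp add: abs_mult mult_left_mono)
    then show ?thesis using z(3) by (simp add: mult.commute)
  qed
  have lip2: "\<bar>\<rho> b - \<rho> a\<bar> \<le> K * \<bar>b - a\<bar>" if "-1 \<le> a" "a \<le> 1" "-1 \<le> b" "b \<le> 1" for a b
  proof (cases a b rule: linorder_cases)
    case less then show ?thesis using lip1 that by blast
  next
    case equal then show ?thesis by simp
  next
    case greater
    then have "\<bar>\<rho> a - \<rho> b\<bar> \<le> K * \<bar>a - b\<bar>" using lip1 that by blast
    then show ?thesis by (simp add: abs_minus_commute)
  qed
  define cl where "cl t = max (-1) (min 1 t)" for t :: real
  have cl_eq: "\<rho> t = \<rho> (cl t)" for t
  proof -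
    have z1: "\<rho> 1 = 0" "\<rho> (-1) = 0" using rho_zero[OF supp] by auto
    show ?thesis
    proof (cases "\<bar>t\<bar> < 1")
      case True then show ?thesis by (simp add: cl_def)
    next
      case False
      then have "\<rho> t = 0" using rho_zero[OF supp] by simp
      moreover have "cl t = 1 \<or> cl t = -1" using False by (auto simp: cl_def)
      ultimately show ?thesis using z1 by auto
    qed
  qed
  have cl_b: "-1 \<le> cl t" "cl t \<le> 1" for t by (auto simp: cl_def)
  have cl_l: "\<bar>cl s - cl t\<bar> \<le> \<bar>s - t\<bar>" for s t by (simp add: cl_def max_def min_def abs_if)
  have L: "\<bar>\<rho> s - \<rho> t\<bar> \<le> K * \<bar>s - t\<bar>" for s t
  proof -
    have "\<bar>\<rho> s - \<rho> t\<bar> = \<bar>\<rho> (cl s) - \<rho> (cl t)\<bar>"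
      by (subst cl_eq[of s], subst cl_eq[of t]) (rule refl)
    also have "\<dots> \<le> K * \<bar>cl s - cl t\<bar>" using lip2 cl_b by blast
    also have "\<dots> \<le> K * \<bar>s - t\<bar>" using cl_l K0 by (simp add: mult_left_mono)
    finally show ?thesis .
  qed
  have B: "\<rho> t \<le> \<rho> 0 + K" for t
  proof -
    have "\<bar>\<rho> (cl t) - \<rho> (cl 0)\<bar> \<le> K * \<bar>cl t - cl 0\<bar>" using lip2 cl_b by blast
    also have "\<dots> \<le> K * 1" using cl_b[of t] K0 by (intro mult_left_mono) (auto simp: cl_def)
    finally show ?thesis using cl_eq[of t] cl_eq[of 0] by simp
  qed
  show ?thesis using K0 L B by blast
qed


locale sm = cpt tag for tag :: "'a::metric_space itself" +
  fixes \<mu> :: "'a measure" and \<rho> :: "real \<Rightarrow> real" and \<phi>t :: "(int \<Rightarrow> 'a) \<Rightarrow> real ^ 'n"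
  assumes \<mu>b: "sets \<mu> = sets borel" and \<mu>p: "prob_space \<mu>"
    and \<mu>f: "\<forall>x e. e > 0 \<longrightarrow> emeasure \<mu> (ball x e) > 0"
    and \<rho>s: "smooth_real \<rho>" and \<rho>n: "\<forall>t. 0 \<le> \<rho> t" and \<rho>supp: "closure {t. \<rho> t \<noteq> 0} \<subseteq> {-1<..<1}"
    and \<rho>0: "\<rho> 0 > 0" and \<phi>c: "d1_continuous_on UNIV \<phi>t"
begin

lemma P_prob: "prob_space (PiM (UNIV::int set) (\<lambda>_. \<mu>))"
proof -
  have "product_prob_space (\<lambda>_::int. \<mu>)"
    unfolding product_prob_space_def product_prob_space_axioms_def product_sigma_finite_def
    using \<mu>p prob_space_imp_sigma_finite by blast
  then interpret pps: product_prob_space "\<lambda>_::int. \<mu>" UNIV .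
  show ?thesis by (rule pps.P.prob_space_axioms)
qed

sublocale PP: prob_space "PiM (UNIV::int set) (\<lambda>_. \<mu>)" by (rule P_prob)

lemma spP: "space (PiM (UNIV::int set) (\<lambda>_. \<mu>)) = UNIV" by (rule space_P[OF \<mu>b])

lemma d1x_cont: "d1_continuous_on UNIV (\<lambda>y. d1 (x::int\<Rightarrow>'a) y)"
  unfolding d1_continuous_on_def
proof (intro ballI allI impI)
  fix y :: "int \<Rightarrow> 'a" and e :: real assume "e > 0"
  have "norm (d1 x y' - d1 x y) < e" if "d1 y y' < e" for y'
  proof -
    have "\<bar>d1 y' x - d1 y x\<bar> \<le> d1 y' y" by (rule d1_diff)
    then show ?thesis using that d1_sym[of y' x] d1_sym[of y x] d1_sym[of y' y] by simp
  qed
  then show "\<exists>d>0. \<forall>y'\<in>UNIV. d1 y y' < d \<longrightarrow> norm (d1 x y' - d1 x y) < e" using \<open>e > 0\<close> by blast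
qed

lemma d1x_meas[measurable]: "(\<lambda>y. d1 (x::int\<Rightarrow>'a) y) \<in> borel_measurable (PiM (UNIV::int set) (\<lambda>_. \<mu>))"
  by (rule meas_d1c[OF \<mu>b d1x_cont])

lemma \<phi>_meas[measurable]: "\<phi>t \<in> borel_measurable (PiM (UNIV::int set) (\<lambda>_. \<mu>))"
  by (rule meas_d1c[OF \<mu>b \<phi>c])

lemma \<rho>_meas[measurable]: "\<rho> \<in> borel_measurable borel"
  by (rule borel_measurable_continuous_onI[OF rho_cont[OF \<rho>s]])

lemma w_meas[measurable]:
  fixes x :: "int \<Rightarrow> 'a"
  shows "(\<lambda>y. \<rho> (d1 x y / s)) \<in> borel_measurable (PiM (UNIV::int set) (\<lambda>_. \<mu>))"
  by measurable

lemma \<phi>_bnd: "\<exists>B\<ge>0. \<forall>y. norm (\<phi>t y) \<le> B"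
proof -
  obtain B where "\<forall>y. norm (\<phi>t y) \<le> B" using d1c_bounded[OF \<phi>c] by blast
  moreover then have "B \<ge> 0" using norm_ge_zero order_trans by blast
  ultimately show ?thesis by blast
qed

lemma \<rho>_bnd: "\<exists>R\<ge>0. \<forall>t. \<rho> t \<le> R"
proof -
  obtain K where "K \<ge> 0" "\<forall>t. \<rho> t \<le> \<rho> 0 + K" using rho_lip[OF \<rho>s \<rho>supp] by blast
  then show ?thesis using \<rho>0 by (intro exI[of _ "\<rho> 0 + K"]) auto
qed

lemma int_w:
  fixes x :: "int \<Rightarrow> 'a"
  shows "integrable (PiM (UNIV::int set) (\<lambda>_. \<mu>)) (\<lambda>y. \<rho> (d1 x y / s))"
proof -
  obtain R where R: "\<forall>t. \<rho> t \<le> R" using \<rho>_bnd by blast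
  show ?thesis
    by (rule PP.integrable_const_bound[where B=R]) (use R \<rho>n in auto)
qed

lemma int_w1:
  fixes x :: "int \<Rightarrow> 'a"
  shows "integrable (PiM (UNIV::int set) (\<lambda>_. \<mu>)) (\<lambda>y. \<rho> (d1 x y / s) *\<^sub>R (1::real))"
  using int_w by simp

lemma int_wg:
  fixes g :: "(int \<Rightarrow> 'a) \<Rightarrow> real ^ 'n" and x :: "int \<Rightarrow> 'a"
  assumes g: "g \<in> borel_measurable (PiM (UNIV::int set) (\<lambda>_. \<mu>))" and gb: "\<forall>y. norm (g y) \<le> G"
  shows "integrable (PiM (UNIV::int set) (\<lambda>_. \<mu>)) (\<lambda>y. \<rho> (d1 x y / s) *\<^sub>R g y)"
proof -
  obtain R where R: "R \<ge> 0" "\<forall>t. \<rho> t \<le> R" using \<rho>_bnd by blast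
  have "norm (\<rho> (d1 x y / s) *\<^sub>R g y) \<le> R * G" for y
  proof -
    have "norm (\<rho> (d1 x y / s) *\<^sub>R g y) = \<rho> (d1 x y / s) * norm (g y)" using \<rho>n by simp
    also have "\<dots> \<le> R * G" using R gb \<rho>n by (intro mult_mono) auto
    finally show ?thesis .
  qed
  then show ?thesis
    by (intro PP.integrable_const_bound[where B="R * G"]) (use g in auto)
qed

lemma int_w\<phi>:
  fixes x :: "int \<Rightarrow> 'a"
  shows "integrable (PiM (UNIV::int set) (\<lambda>_. \<mu>)) (\<lambda>y. \<rho> (d1 x y / s) *\<^sub>R \<phi>t y)"
proof -
  obtain B where "\<forall>y. norm (\<phi>t y) \<le> B" using \<phi>_bnd by blast
  then show ?thesis by (intro int_wg) auto
qed

end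

context sm begin

lemma norm_int_le:
  fixes g :: "(int \<Rightarrow> 'a) \<Rightarrow> 'b::{banach,second_countable_topology}"
  assumes "integrable (PiM (UNIV::int set) (\<lambda>_. \<mu>)) g" and "\<forall>y. norm (g y) \<le> c"
  shows "norm (integral\<^sup>L (PiM (UNIV::int set) (\<lambda>_. \<mu>)) g) \<le> c"
proof -
  have "norm (integral\<^sup>L (PiM (UNIV::int set) (\<lambda>_. \<mu>)) g) \<le> (\<integral>y. norm (g y) \<partial>(PiM (UNIV::int set) (\<lambda>_. \<mu>)))"
    by (rule integral_norm_bound)
  also have "\<dots> \<le> (\<integral>y. c \<partial>(PiM (UNIV::int set) (\<lambda>_. \<mu>)))"
    by (rule integral_mono) (use assms in auto)
  also have "\<dots> = c" by (simp add: PP.prob_space)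
  finally show ?thesis .
qed

lemma rho_pos_near0: "\<exists>\<eta>>0. \<forall>t. \<bar>t\<bar> < \<eta> \<longrightarrow> \<rho> t > \<rho> 0 / 2"
proof -
  have "isCont \<rho> 0" using rho_cont[OF \<rho>s] continuous_on_eq_continuous_at[OF open_UNIV] by blast
  then have "(\<rho> \<longlongrightarrow> \<rho> 0) (at 0)" by (simp add: isCont_def)
  moreover have "\<rho> 0 / 2 < \<rho> 0" using \<rho>0 by simp
  ultimately have "\<forall>\<^sub>F t in at 0. \<rho> 0 / 2 < \<rho> t" by (rule order_tendstoD)
  then obtain d where d: "d > 0" "\<forall>t. t \<noteq> 0 \<and> dist t 0 < d \<longrightarrow> \<rho> 0 / 2 < \<rho> t"
    unfolding eventually_at by blast
  have "\<rho> t > \<rho> 0 / 2" if "\<bar>t\<bar> < d" for t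
  proof (cases "t = 0")
    case True then show ?thesis using \<rho>0 by simp
  next
    case False then show ?thesis using d(2) that by (simp add: dist_real_def)
  qed
  then show ?thesis using d(1) by blast
qed

lemma N_pos:
  fixes x :: "int \<Rightarrow> 'a"
  assumes s: "s > 0"
  shows "0 < (\<integral>y. \<rho> (d1 x y / s) \<partial>(PiM (UNIV::int set) (\<lambda>_. \<mu>)))"
proof -
  let ?P = "PiM (UNIV::int set) (\<lambda>_. \<mu>)"
  obtain \<eta> where \<eta>: "\<eta> > 0" "\<forall>t. \<bar>t\<bar> < \<eta> \<longrightarrow> \<rho> t > \<rho> 0 / 2" using rho_pos_near0 by blast
  have "\<eta> * s > 0" using \<eta>(1) s by simp
  then obtain F \<delta> where Fd: "finite F" "\<delta> > 0"
      "\<forall>x y::int\<Rightarrow>'a. (\<forall>n\<in>F. dist (x n) (y n) < \<delta>) \<longrightarrow> d1 x y < \<eta> * s"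
    using d1_small[of "\<eta> * s"] by auto
  define C where "C = prod_emb UNIV (\<lambda>_::int. \<mu>) F (PiE F (\<lambda>n. ball (x n) \<delta>))"
  have Cs: "C \<in> sets ?P" unfolding C_def
    by (rule sets_PiM_I) (use Fd(1) \<mu>b in auto)
  have inC: "\<rho> (d1 x y / s) > \<rho> 0 / 2" if "y \<in> C" for y
  proof -
    have "\<forall>n\<in>F. y n \<in> ball (x n) \<delta>" using that unfolding C_def prod_emb_def by (auto simp: PiE_iff)
    then have "\<forall>n\<in>F. dist (x n) (y n) < \<delta>" by simp
    then have "d1 x y < \<eta> * s" using Fd(3) by blast
    then have "\<bar>d1 x y / s\<bar> < \<eta>" using s d1_nonneg[of x y] by (simp add: field_simps)
    then show ?thesis using \<eta>(2) by blast
  qed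
  have "emeasure ?P C = (\<Prod>n\<in>F. emeasure \<mu> (ball (x n) \<delta>))"
    unfolding C_def by (rule emeasure_PiM_emb) (use \<mu>p Fd(1) \<mu>b in auto)
  also have "\<dots> > 0"
  proof -
    have "\<forall>n\<in>F. emeasure \<mu> (ball (x n) \<delta>) \<noteq> 0" using \<mu>f Fd(2) by (auto simp: zero_less_iff_neq_zero)
    then have "(\<Prod>n\<in>F. emeasure \<mu> (ball (x n) \<delta>)) \<noteq> 0" using Fd(1) by (simp add: prod_zero_iff)
    then show ?thesis by (simp add: zero_less_iff_neq_zero)
  qed
  finally have "emeasure ?P C > 0" .
  then have mC: "measure ?P C > 0" by (simp add: PP.emeasure_eq_measure)
  have "(\<integral>y. (\<rho> 0 / 2) * indicator C y \<partial>?P) \<le> (\<integral>y. \<rho> (d1 x y / s) \<partial>?P)"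
  proof (rule integral_mono)
    show "integrable ?P (\<lambda>y. \<rho> 0 / 2 * indicator C y)"
      by (rule PP.integrable_const_bound[where B="\<rho> 0 / 2"]) (use Cs \<rho>0 in \<open>auto simp: indicator_def\<close>)
    show "integrable ?P (\<lambda>y. \<rho> (d1 x y / s))" by (rule int_w)
    fix y show "\<rho> 0 / 2 * indicator C y \<le> \<rho> (d1 x y / s)"
      using inC[of y] \<rho>n by (cases "y \<in> C") (auto simp: indicator_def less_imp_le)
  qed
  moreover have "(\<integral>y. (\<rho> 0 / 2) * indicator C y \<partial>?P) = \<rho> 0 / 2 * measure ?P C"
    using Cs by (simp add: spP)
  moreover have "\<rho> 0 / 2 * measure ?P C > 0" using mC \<rho>0 by simp
  ultimately show ?thesis by linarith
qed

end

context sm begin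

lemma sm_lip:
  assumes r: "r > 0"
  shows "\<exists>C\<ge>0. \<forall>x x'. norm (smoothing \<mu> \<rho> r \<phi>t x - smoothing \<mu> \<rho> r \<phi>t x') \<le> C * d1 x x'"
proof -
  let ?P = "PiM (UNIV::int set) (\<lambda>_. \<mu>)"
  obtain K where K: "K \<ge> 0" "\<forall>s t. \<bar>\<rho> s - \<rho> t\<bar> \<le> K * \<bar>s - t\<bar>" using rho_lip[OF \<rho>s \<rho>supp] by blast
  obtain B where B: "B \<ge> 0" "\<forall>y. norm (\<phi>t y) \<le> B" using \<phi>_bnd by blast
  have "norm (smoothing \<mu> \<rho> r \<phi>t x - smoothing \<mu> \<rho> r \<phi>t x') \<le> (K * B / r) * d1 x x'" for x x' :: "int \<Rightarrow> 'a"
  proof -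
    have eq: "smoothing \<mu> \<rho> r \<phi>t x - smoothing \<mu> \<rho> r \<phi>t x' =
        (\<integral>y. \<rho> (d1 x y / r) *\<^sub>R \<phi>t y - \<rho> (d1 x' y / r) *\<^sub>R \<phi>t y \<partial>?P)"
      unfolding smoothing_def by (rule Bochner_Integration.integral_diff[symmetric]) (rule int_w\<phi>)+
    have pt: "norm (\<rho> (d1 x y / r) *\<^sub>R \<phi>t y - \<rho> (d1 x' y / r) *\<^sub>R \<phi>t y) \<le> (K * B / r) * d1 x x'" for y
    proof -
      have "norm (\<rho> (d1 x y / r) *\<^sub>R \<phi>t y - \<rho> (d1 x' y / r) *\<^sub>R \<phi>t y)
          = \<bar>\<rho> (d1 x y / r) - \<rho> (d1 x' y / r)\<bar> * norm (\<phi>t y)"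
        by (simp add: scaleR_left_diff_distrib[symmetric])
      also have "\<dots> \<le> (K * \<bar>d1 x y / r - d1 x' y / r\<bar>) * B"
        using K B by (intro mult_mono) auto
      also have "\<bar>d1 x y / r - d1 x' y / r\<bar> = \<bar>d1 x y - d1 x' y\<bar> / r"
        using r by (simp add: diff_divide_distrib[symmetric])
      also have "\<bar>d1 x y - d1 x' y\<bar> \<le> d1 x x'" by (rule d1_diff)
      then have "K * (\<bar>d1 x y - d1 x' y\<bar> / r) * B \<le> K * (d1 x x' / r) * B"
        using K(1) B(1) r by (intro mult_right_mono mult_left_mono divide_right_mono) auto
      finally show ?thesis by (simp add: field_simps)
    qed
    show ?thesis unfolding eq
      by (rule norm_int_le) (use int_w\<phi> pt in auto)
  qed
  moreover have "K * B / r \<ge> 0" using K(1) B(1) r by simp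
  ultimately show ?thesis by blast
qed

lemma sm_d1cont:
  assumes r: "r > 0"
  shows "d1_continuous_on S (smoothing \<mu> \<rho> r \<phi>t)"
  unfolding d1_continuous_on_def
proof (intro ballI allI impI)
  fix x :: "int \<Rightarrow> 'a" and e :: real assume "e > 0"
  obtain C where C: "C \<ge> 0" "\<forall>x x'. norm (smoothing \<mu> \<rho> r \<phi>t x - smoothing \<mu> \<rho> r \<phi>t x') \<le> C * d1 x x'"
    using sm_lip[OF r] by blast
  have "norm (smoothing \<mu> \<rho> r \<phi>t y - smoothing \<mu> \<rho> r \<phi>t x) < e" if "d1 x y < e / (C + 1)" for y
  proof -
    have "norm (smoothing \<mu> \<rho> r \<phi>t y - smoothing \<mu> \<rho> r \<phi>t x) \<le> C * d1 y x" using C(2) by blast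
    also have "\<dots> \<le> C * (e / (C + 1))" using that d1_sym[of x y] C(1) by (intro mult_left_mono) auto
    also have "\<dots> < e" using C(1) \<open>e > 0\<close> by (simp add: field_simps)
    finally show ?thesis .
  qed
  moreover have "e / (C + 1) > 0" using C(1) \<open>e > 0\<close> by simp
  ultimately show "\<exists>d>0. \<forall>y\<in>S. d1 x y < d \<longrightarrow> norm (smoothing \<mu> \<rho> r \<phi>t y - smoothing \<mu> \<rho> r \<phi>t x) < e"
    by blast
qed

lemma sm_dinf:
  assumes r: "r > 0"
  shows "\<exists>L. \<forall>x y. norm (smoothing \<mu> \<rho> r \<phi>t x - smoothing \<mu> \<rho> r \<phi>t y) \<le> L * dinf x y"
proof -
  obtain C where C: "C \<ge> 0" "\<forall>x x'. norm (smoothing \<mu> \<rho> r \<phi>t x - smoothing \<mu> \<rho> r \<phi>t x') \<le> C * d1 x x'"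
    using sm_lip[OF r] by blast
  have "norm (smoothing \<mu> \<rho> r \<phi>t x - smoothing \<mu> \<rho> r \<phi>t y) \<le> (C * W) * dinf x y" for x y :: "int \<Rightarrow> 'a"
  proof -
    have "norm (smoothing \<mu> \<rho> r \<phi>t x - smoothing \<mu> \<rho> r \<phi>t y) \<le> C * d1 x y" using C(2) by blast
    also have "\<dots> \<le> C * (W * dinf x y)" using C(1) d1_le_dinf by (intro mult_left_mono) auto
    finally show ?thesis by simp
  qed
  then show ?thesis by blast
qed

end

context sm begin

lemma approx:
  fixes x :: "int \<Rightarrow> 'a"
  assumes s: "s > 0" and \<eta>: "\<eta> \<ge> 0" and U: "\<forall>y. d1 x y < s \<longrightarrow> norm (\<phi>t y - \<phi>t x) \<le> \<eta>"
  shows "norm (smoothing \<mu> \<rho> s \<phi>t x /\<^sub>R smoothing \<mu> \<rho> s (\<lambda>_. 1::real) x - \<phi>t x) \<le> \<eta>"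
proof -
  let ?P = "PiM (UNIV::int set) (\<lambda>_. \<mu>)"
  define N where "N = (\<integral>y. \<rho> (d1 x y / s) \<partial>?P)"
  have N1: "smoothing \<mu> \<rho> s (\<lambda>_. 1::real) x = N" unfolding smoothing_def N_def by simp
  have Npos: "N > 0" unfolding N_def by (rule N_pos[OF s])
  obtain B where B: "B \<ge> 0" "\<forall>y. norm (\<phi>t y) \<le> B" using \<phi>_bnd by blast
  have intc: "integrable ?P (\<lambda>y. \<rho> (d1 x y / s) *\<^sub>R \<phi>t x)"
    by (rule integrable_scaleR_left) (rule int_w)
  have intd: "integrable ?P (\<lambda>y. \<rho> (d1 x y / s) *\<^sub>R (\<phi>t y - \<phi>t x))"
  proof (rule int_wg)
    show "(\<lambda>y. \<phi>t y - \<phi>t x) \<in> borel_measurable ?P" by measurable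
    show "\<forall>y. norm (\<phi>t y - \<phi>t x) \<le> B + B"
      using B(2) norm_triangle_ineq4 order_trans add_mono by metis
  qed
  have I: "smoothing \<mu> \<rho> s \<phi>t x - N *\<^sub>R \<phi>t x = (\<integral>y. \<rho> (d1 x y / s) *\<^sub>R (\<phi>t y - \<phi>t x) \<partial>?P)"
  proof -
    have "N *\<^sub>R \<phi>t x = (\<integral>y. \<rho> (d1 x y / s) *\<^sub>R \<phi>t x \<partial>?P)"
      unfolding N_def by (rule integral_scaleR_left[symmetric]) (rule int_w)
    then have "smoothing \<mu> \<rho> s \<phi>t x - N *\<^sub>R \<phi>t x =
        (\<integral>y. \<rho> (d1 x y / s) *\<^sub>R \<phi>t y - \<rho> (d1 x y / s) *\<^sub>R \<phi>t x \<partial>?P)"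
      unfolding smoothing_def by (simp add: Bochner_Integration.integral_diff[OF int_w\<phi> intc])
    then show ?thesis by (simp add: scaleR_right_diff_distrib)
  qed
  have bnd: "norm (\<integral>y. \<rho> (d1 x y / s) *\<^sub>R (\<phi>t y - \<phi>t x) \<partial>?P) \<le> \<eta> * N"
  proof -
    have "norm (\<integral>y. \<rho> (d1 x y / s) *\<^sub>R (\<phi>t y - \<phi>t x) \<partial>?P)
        \<le> (\<integral>y. norm (\<rho> (d1 x y / s) *\<^sub>R (\<phi>t y - \<phi>t x)) \<partial>?P)"
      by (rule integral_norm_bound)
    also have "\<dots> \<le> (\<integral>y. \<eta> * \<rho> (d1 x y / s) \<partial>?P)"
    proof (rule integral_mono)
      show "integrable ?P (\<lambda>y. norm (\<rho> (d1 x y / s) *\<^sub>R (\<phi>t y - \<phi>t x)))"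
        by (rule integrable_norm[OF intd])
      show "integrable ?P (\<lambda>y. \<eta> * \<rho> (d1 x y / s))"
        by (rule integrable_mult_right) (rule int_w)
      fix y
      show "norm (\<rho> (d1 x y / s) *\<^sub>R (\<phi>t y - \<phi>t x)) \<le> \<eta> * \<rho> (d1 x y / s)"
      proof (cases "\<rho> (d1 x y / s) = 0")
        case True then show ?thesis by simp
      next
        case False
        have "\<bar>d1 x y / s\<bar> < 1"
        proof (rule ccontr)
          assume "\<not> \<bar>d1 x y / s\<bar> < 1"
          then show False using rho_zero[OF \<rho>supp, of "d1 x y / s"] False by simp
        qed
        then have "d1 x y < s" using s d1_nonneg[of x y] by (simp add: field_simps)
        then have "norm (\<phi>t y - \<phi>t x) \<le> \<eta>" using U by blast
        then have "\<rho> (d1 x y / s) * norm (\<phi>t y - \<phi>t x) \<le> \<rho> (d1 x y / s) * \<eta>"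
          using \<rho>n by (intro mult_left_mono) auto
        then show ?thesis using \<rho>n by (simp add: mult.commute)
      qed
    qed
    also have "\<dots> = \<eta> * N" unfolding N_def by simp
    finally show ?thesis .
  qed
  have "smoothing \<mu> \<rho> s \<phi>t x /\<^sub>R N - \<phi>t x = inverse N *\<^sub>R (smoothing \<mu> \<rho> s \<phi>t x - N *\<^sub>R \<phi>t x)"
    using Npos by (simp add: scaleR_right_diff_distrib)
  then have "norm (smoothing \<mu> \<rho> s \<phi>t x /\<^sub>R N - \<phi>t x) = inverse N * norm (smoothing \<mu> \<rho> s \<phi>t x - N *\<^sub>R \<phi>t x)"
    using Npos by simp
  also have "\<dots> \<le> inverse N * (\<eta> * N)" unfolding I using bnd Npos by (intro mult_left_mono) auto
  also have "\<dots> = \<eta>" using Npos by simp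
  finally show ?thesis unfolding N1 .
qed

lemma conv:
  fixes Ob :: "(int \<Rightarrow> 'a) set"
  assumes O: "Ob \<noteq> {}"
  shows "((\<lambda>s. SUP x\<in>Ob. norm (smoothing \<mu> \<rho> s \<phi>t x /\<^sub>R smoothing \<mu> \<rho> s (\<lambda>_. 1::real) x - \<phi>t x))
        \<longlongrightarrow> 0) (at_right 0)"
proof (rule tendstoI)
  fix e :: real assume e: "e > 0"
  obtain \<delta> where \<delta>: "\<delta> > 0" "\<forall>x y. d1 x y < \<delta> \<longrightarrow> norm (\<phi>t y - \<phi>t x) < e / 2"
    using d1c_unif[OF \<phi>c, of "e/2"] e by auto
  have "dist (SUP x\<in>Ob. norm (smoothing \<mu> \<rho> s \<phi>t x /\<^sub>R smoothing \<mu> \<rho> s (\<lambda>_. 1::real) x - \<phi>t x)) 0 < e"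
    if s: "s > 0" "s < \<delta>" for s
  proof -
    let ?h = "\<lambda>x. norm (smoothing \<mu> \<rho> s \<phi>t x /\<^sub>R smoothing \<mu> \<rho> s (\<lambda>_. 1::real) x - \<phi>t x)"
    have hb: "?h x \<le> e / 2" for x
    proof (rule approx[OF s(1)])
      show "e / 2 \<ge> 0" using e by simp
      show "\<forall>y. d1 x y < s \<longrightarrow> norm (\<phi>t y - \<phi>t x) \<le> e / 2"
        using \<delta>(2) s(2) by (auto intro: less_imp_le)
    qed
    have up: "(SUP x\<in>Ob. ?h x) \<le> e / 2" using O hb by (intro cSUP_least) auto
    obtain x0 where "x0 \<in> Ob" using O by blast
    have bdd: "bdd_above (?h ` Ob)" using hb by (intro bdd_aboveI2[where M="e/2"]) auto
    have "0 \<le> ?h x0" by simp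
    also have "?h x0 \<le> (SUP x\<in>Ob. ?h x)" using \<open>x0 \<in> Ob\<close> bdd by (rule cSUP_upper)
    finally have lo: "0 \<le> (SUP x\<in>Ob. ?h x)" .
    show ?thesis using up lo e by (simp add: dist_real_def)
  qed
  then show "\<forall>\<^sub>F s in at_right 0. dist (SUP x\<in>Ob. norm (smoothing \<mu> \<rho> s \<phi>t x /\<^sub>R smoothing \<mu> \<rho> s (\<lambda>_. 1::real) x - \<phi>t x)) 0 < e"
    unfolding eventually_at_right_field using \<delta>(1) by blast
qed

lemma supp:
  assumes r: "r > 0"
  shows "d1_support (smoothing \<mu> \<rho> r \<phi>t) S \<subseteq> d1_nbhd (d1_support \<phi>t UNIV) r"
proof
  fix x assume "x \<in> d1_support (smoothing \<mu> \<rho> r \<phi>t) S"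
  then have xs: "\<forall>e>0. \<exists>y\<in>S. smoothing \<mu> \<rho> r \<phi>t y \<noteq> 0 \<and> d1 x y < e"
    unfolding d1_support_def by blast
  obtain c where c: "0 < c" "c < 1" "\<forall>t. \<rho> t \<noteq> 0 \<longrightarrow> \<bar>t\<bar> < c" using rho_strict[OF \<rho>supp] by blast
  have "(1 - c) * r > 0" using c r by simp
  then obtain y where y: "smoothing \<mu> \<rho> r \<phi>t y \<noteq> 0" "d1 x y < (1 - c) * r" using xs by blast
  have "\<exists>z. \<rho> (d1 y z / r) *\<^sub>R \<phi>t z \<noteq> 0"
  proof (rule ccontr)
    assume "\<not> ?thesis"
    then have "(\<lambda>z. \<rho> (d1 y z / r) *\<^sub>R \<phi>t z) = (\<lambda>z. 0)" by auto
    then have "smoothing \<mu> \<rho> r \<phi>t y = 0" unfolding smoothing_def by simp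
    then show False using y(1) by simp
  qed
  then obtain z where z: "\<rho> (d1 y z / r) \<noteq> 0" "\<phi>t z \<noteq> 0" by auto
  have "\<bar>d1 y z / r\<bar> < c" using c(3) z(1) by blast
  then have dz: "d1 y z < c * r" using r d1_nonneg[of y z] by (simp add: field_simps)
  have zs: "z \<in> d1_support \<phi>t UNIV"
    unfolding d1_support_def using z(2) d1_self[of z] by auto
  have "d1 x z \<le> d1 x y + d1 y z" by (rule d1_tri)
  also have "\<dots> < r" using y(2) dz by (simp add: algebra_simps)
  finally show "x \<in> d1_nbhd (d1_support \<phi>t UNIV) r" unfolding d1_nbhd_def using zs by blast
qed

end

theorem lemma4:
  fixes f :: "'a::metric_space \<Rightarrow> 'a"
    and \<mu> :: "'a measure"
    and \<phi> \<phi>t :: "(int \<Rightarrow> 'a) \<Rightarrow> real ^ 'n"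
    and \<rho> :: "real \<Rightarrow> real"
    and r :: real
  assumes M_compact: "compact (UNIV :: 'a set)"
    and f_cont: "continuous_on UNIV f"
    and \<phi>_cont: "d1_continuous_on (orbits f) \<phi>"
    and \<phi>t_cont: "d1_continuous_on UNIV \<phi>t"
    and \<phi>t_ext: "\<forall>x\<in>orbits f. \<phi>t x = \<phi> x"
    and \<rho>_smooth: "smooth_real \<rho>"
    and \<rho>_nonneg: "\<forall>t. 0 \<le> \<rho> t"
    and \<rho>_supp: "closure {t. \<rho> t \<noteq> 0} \<subseteq> {-1<..<1}"
    and \<rho>_0: "\<rho> 0 > 0"
    and \<mu>_borel: "sets \<mu> = sets borel"
    and \<mu>_prob: "prob_space \<mu>"
    and \<mu>_full: "\<forall>x e. e > 0 \<longrightarrow> emeasure \<mu> (ball x e) > 0"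
    and r_pos: "r > 0"
  shows
    "(\<forall>x\<in>orbits f.
        integrable (PiM UNIV (\<lambda>_. \<mu>)) (\<lambda>y. \<rho> (d1 x y / r) *\<^sub>R \<phi>t y)
      \<and> integrable (PiM UNIV (\<lambda>_. \<mu>)) (\<lambda>y. \<rho> (d1 x y / r) *\<^sub>R (1::real))
      \<and> smoothing \<mu> \<rho> r (\<lambda>_. 1::real) x > 0)
   \<and> d1_continuous_on (orbits f) (smoothing \<mu> \<rho> r \<phi>t)
   \<and> (\<exists>L. \<forall>x\<in>orbits f. \<forall>y\<in>orbits f.
         norm (smoothing \<mu> \<rho> r \<phi>t x - smoothing \<mu> \<rho> r \<phi>t y) \<le> L * dinf x y)
   \<and> ((\<lambda>s. SUP x\<in>orbits f. norm (smoothing \<mu> \<rho> s \<phi>t x /\<^sub>R smoothing \<mu> \<rho> s (\<lambda>_. 1::real) x - \<phi>t x))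
        \<longlongrightarrow> 0) (at_right 0)
   \<and> d1_support (smoothing \<mu> \<rho> r \<phi>t) (orbits f) \<subseteq> d1_nbhd (d1_support \<phi>t UNIV) r"
proof -
  have smi: "sm \<mu> \<rho> \<phi>t"
    by (intro sm.intro cpt.intro sm_axioms.intro)
       (rule M_compact \<mu>_borel \<mu>_prob \<mu>_full \<rho>_smooth \<rho>_nonneg \<rho>_supp \<rho>_0 \<phi>t_cont)+
  interpret S: sm "TYPE('a)" \<mu> \<rho> \<phi>t by (rule smi)
  have i: "\<forall>x\<in>orbits f.
        integrable (PiM UNIV (\<lambda>_. \<mu>)) (\<lambda>y. \<rho> (d1 x y / r) *\<^sub>R \<phi>t y)
      \<and> integrable (PiM UNIV (\<lambda>_. \<mu>)) (\<lambda>y. \<rho> (d1 x y / r) *\<^sub>R (1::real))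
      \<and> smoothing \<mu> \<rho> r (\<lambda>_. 1::real) x > 0"
  proof
    fix x :: "int \<Rightarrow> 'a" assume "x \<in> orbits f"
    have "smoothing \<mu> \<rho> r (\<lambda>_. 1::real) x = (\<integral>y. \<rho> (d1 x y / r) \<partial>(PiM UNIV (\<lambda>_. \<mu>)))"
      unfolding smoothing_def by simp
    then show "integrable (PiM UNIV (\<lambda>_. \<mu>)) (\<lambda>y. \<rho> (d1 x y / r) *\<^sub>R \<phi>t y)
      \<and> integrable (PiM UNIV (\<lambda>_. \<mu>)) (\<lambda>y. \<rho> (d1 x y / r) *\<^sub>R (1::real))
      \<and> smoothing \<mu> \<rho> r (\<lambda>_. 1::real) x > 0"
      using S.int_w\<phi> S.int_w1 S.N_pos[OF r_pos, of x] by simp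
  qed
  have ii: "d1_continuous_on (orbits f) (smoothing \<mu> \<rho> r \<phi>t)" by (rule S.sm_d1cont[OF r_pos])
  have iii: "\<exists>L. \<forall>x\<in>orbits f. \<forall>y\<in>orbits f.
         norm (smoothing \<mu> \<rho> r \<phi>t x - smoothing \<mu> \<rho> r \<phi>t y) \<le> L * dinf x y"
    using S.sm_dinf[OF r_pos] by blast
  have iv: "((\<lambda>s. SUP x\<in>orbits f. norm (smoothing \<mu> \<rho> s \<phi>t x /\<^sub>R smoothing \<mu> \<rho> s (\<lambda>_. 1::real) x - \<phi>t x))
        \<longlongrightarrow> 0) (at_right 0)"
    by (rule S.conv[OF S.orbits_ne[OF f_cont]])
  have v: "d1_support (smoothing \<mu> \<rho> r \<phi>t) (orbits f) \<subseteq> d1_nbhd (d1_support \<phi>t UNIV) r"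
    by (rule S.supp[OF r_pos])
  show ?thesis using i ii iii iv v by blast
qed

end
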